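(* Let $J\ge 1$, let $\Lambda=\Lambda_0\times\cdots\times\Lambda_J\subset\mathcal{G}$ and $\tilde\Lambda=\tilde\Lambda_0\times\cdots\times\tilde\Lambda_J\subset\mathcal{G}$ be finite product sets with $\Lambda\subseteq\tilde\Lambda$ and $\#(\tilde\Lambda_j\setminus\Lambda_j)=1$ for $j=1,\dots,J$, let $\mathbf{r}\in\ell_2(\mathcal{G})$ with $\operatorname{supp}\mathbf{r}\subseteq\tilde\Lambda$, and let $\alpha\in(0,1)$. Let $\bar\Lambda=\bar\Lambda_0\times\cdots\times\bar\Lambda_J$ be the product set produced by the procedure $\mathrm{Expand}(\mathbf{r},\Lambda,\tilde\Lambda,\alpha)$ described in the context. Then $\|\mathbf{R}_{\bar\Lambda}\mathbf{r}\|\ge\alpha\|\mathbf{r}\|$. Moreover, if $\widehat\Lambda=\widehat\Lambda_0\times\cdots\times\widehat\Lambda_J\subset\mathcal{G}$ is a product set such that $\sum_{j=0}^J\#(\widehat\Lambda_j\setminus\Lambda_j)$ is minimal among all product sets $\Lambda'\subset\mathcal{G}$ satisfying $\|\mathbf{R}_{\Lambda'}\mathbf{r}\|\ge\alpha\|\mathbf{r}\|$, then \[ \sum_{j=0}^J\#(\bar\Lambda_j\setminus\Lambda_j)\le\sum_{j=0}^J\#(\widehat\Lambda_j\setminus\Lambda_j)+J . \]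
   Context: Index sets: $\mathcal{F}=\{\nu\in\mathbb{N}_0^{\mathbb{N}}:\nu_i\neq0$ for only finitely many $i\}$, $\mathcal{S}$ a countable index set, $\mathcal{G}_0=\mathcal{F}\times\mathcal{S}$ (elements written $(\bar\nu,\lambda)$), $\mathcal{G}_j=\mathbb{N}_0$ for $j=1,\dots,J$, and $\mathcal{G}=\mathcal{G}_0\times\mathcal{G}_1\times\cdots\times\mathcal{G}_J$; $\|\cdot\|$ is the $\ell_2(\mathcal{G})$ norm. A product set is a set of the form $\Lambda_0\times\cdots\times\Lambda_J$ with $\Lambda_j\subseteq\mathcal{G}_j$. For $\Lambda\subseteq\mathcal{G}$, $\mathbf{R}_\Lambda$ is the operator on $\ell_2(\mathcal{G})$ multiplying pointwise by the indicator function of $\Lambda$. Contractions: for $\mathbf{v}\in\ell_2(\mathcal{G})$, with entries $\mathbf{v}_{(\bar\nu,\lambda),\nu}$ for $(\bar\nu,\lambda)\in\mathcal{G}_0$, $\nu=(\nu_1,\dots,\nu_J)\in\mathcal{G}_1\times\cdots\times\mathcal{G}_J$, define $\pi^{(0)}_{(\bar\nu,\lambda)}(\mathbf{v})=\big(\sum_{\nu}|\mathbf{v}_{(\bar\nu,\lambda),\nu}|^2\big)^{1/2}$ and, for $j=1,\dots,J$ and $\nu_j\in\mathcal{G}_j$, $\pi^{(j)}_{\nu_j}(\mathbf{v})=\big(\sum_{(\bar\nu,\lambda)\in\mathcal{G}_0}\sum_{\check\nu_j}|\mathbf{v}_{(\bar\nu,\lambda),\nu}|^2\big)^{1/2}$,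 where $\check\nu_j=(\nu_1,\dots,\nu_{j-1},\nu_{j+1},\dots,\nu_J)$ ranges over $\prod_{i\neq j,\,1\le i\le J}\mathcal{G}_i$. Procedure $\mathrm{Expand}(\mathbf{r},\Lambda,\tilde\Lambda,\alpha)$: (1) Consider the finite family of "new-index contractions" consisting of $\pi^{(0)}_{(\bar\nu,\lambda)}(\mathbf{r})$ for $(\bar\nu,\lambda)\in\tilde\Lambda_0\setminus\Lambda_0$ and $\pi^{(j)}_{\nu_j}(\mathbf{r})$ for $\nu_j\in\tilde\Lambda_j\setminus\Lambda_j$, $j=1,\dots,J$, each associated with its mode $j$ and index; arrange them in nonincreasing order $\pi^*_1\ge\pi^*_2\ge\cdots$. (2) Let $M$ be the smallest nonnegative integer with $\sum_{n=1}^M|\pi^*_n|^2+\|\mathbf{R}_\Lambda\mathbf{r}\|^2\ge\alpha^2\|\mathbf{r}\|^2$. (3) For $j=0,\dots,J$ let $\Lambda^{\min}_j$ be $\Lambda_j$ together with the mode-$j$ indices associated with $\pi^*_1,\dots,\pi^*_M$, and $\Lambda^{\min}=\Lambda^{\min}_0\times\cdots\times\Lambda^{\min}_J$. (4) If $\|\mathbf{R}_{\Lambda^{\min}}\mathbf{r}\|\ge\alpha\|\mathbf{r}\|$, output $\bar\Lambda=\Lambda^{\min}$. (5) Otherwise set $\bar\Lambda_j=\tilde\Lambda_j$ for $j=1,\dots,J$; arrange the values $\pi^{(0)}_{(\bar\nu,\lambda)}(\mathbf{r})$, $(\bar\nu,\lambda)\in\tilde\Lambda_0\setminus\Lambda_0$,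 in nonincreasing order $\pi^{**}_1\ge\pi^{**}_2\ge\cdots$; let $K$ be the smallest nonnegative integer with $\sum_{n=1}^K|\pi^{**}_n|^2+\sum_{(\bar\nu,\lambda)\in\Lambda_0}|\pi^{(0)}_{(\bar\nu,\lambda)}(\mathbf{r})|^2\ge\alpha^2\|\mathbf{r}\|^2$; set $\bar\Lambda_0=\Lambda_0\cup\{$indices associated with $\pi^{**}_1,\dots,\pi^{**}_K\}$, and output $\bar\Lambda=\bar\Lambda_0\times\cdots\times\bar\Lambda_J$. *)

theory Defs
  imports "HOL-Analysis.Analysis"
begin

text \<open>F = finitely supported sequences nat => nat; G0 = F x S with S a countable
type 's; an element of G is a pair (g0, nu) with g0 in G0 and nu :: nat => nat representing
(nu_1,...,nu_J) (entries outside {1..J} are required to be 0).\<close>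

definition Fset :: "(nat \<Rightarrow> nat) set" where
  "Fset = {nu. finite {i. nu i \<noteq> 0}}"

definition G0set :: "((nat \<Rightarrow> nat) \<times> 's::countable) set" where
  "G0set = Fset \<times> UNIV"

definition prodset :: "nat \<Rightarrow> ('g set) \<Rightarrow> (nat \<Rightarrow> nat set) \<Rightarrow> ('g \<times> (nat \<Rightarrow> nat)) set" where
  "prodset J L0 Ls = {(g, nu). g \<in> L0 \<and> (\<forall>j\<in>{1..J}. nu j \<in> Ls j) \<and> (\<forall>j. j \<notin> {1..J} \<longrightarrow> nu j = 0)}"

definition l2norm :: "('x \<Rightarrow> real) \<Rightarrow> real" where
  "l2norm v = sqrt (\<Sum>\<^sub>\<infinity>x. (v x)\<^sup>2)"

definition restr :: "'x set \<Rightarrow> ('x \<Rightarrow> real) \<Rightarrow> ('x \<Rightarrow> real)" where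
  "restr L v = (\<lambda>x. if x \<in> L then v x else 0)"

definition pi0 :: "('g \<times> (nat \<Rightarrow> nat) \<Rightarrow> real) \<Rightarrow> 'g \<Rightarrow> real" where
  "pi0 v g = sqrt (\<Sum>\<^sub>\<infinity>nu. (v (g, nu))\<^sup>2)"

definition pij :: "('g \<times> (nat \<Rightarrow> nat) \<Rightarrow> real) \<Rightarrow> nat \<Rightarrow> nat \<Rightarrow> real" where
  "pij v j n = sqrt (\<Sum>\<^sub>\<infinity>x \<in> {x. snd x j = n}. (v x)\<^sup>2)"

text \<open>New-index contractions: Inl g for mode 0, Inr (j, n) for mode j >= 1.\<close>

definition new_items :: "nat \<Rightarrow> 'g set \<Rightarrow> (nat \<Rightarrow> nat set) \<Rightarrow> 'g set \<Rightarrow> (nat \<Rightarrow> nat set)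
    \<Rightarrow> ('g + nat \<times> nat) set" where
  "new_items J L0 Ls T0 Ts =
     Inl ` (T0 - L0) \<union> {Inr (j, n) | j n. j \<in> {1..J} \<and> n \<in> Ts j - Ls j}"

definition cval :: "('g \<times> (nat \<Rightarrow> nat) \<Rightarrow> real) \<Rightarrow> ('g + nat \<times> nat) \<Rightarrow> real" where
  "cval v i = (case i of Inl g \<Rightarrow> pi0 v g | Inr (j, n) \<Rightarrow> pij v j n)"

text \<open>expand_out J r L0 Ls T0 Ts alpha B0 Bs: (B0, Bs) is a possible output of
Expand(r, Lambda, tilde Lambda, alpha) for some admissible (tie-breaking) nonincreasing ordering.\<close>

definition expand_out :: "nat \<Rightarrow> ('g \<times> (nat \<Rightarrow> nat) \<Rightarrow> real) \<Rightarrow> 'g set \<Rightarrow> (nat \<Rightarrow> nat set)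
    \<Rightarrow> 'g set \<Rightarrow> (nat \<Rightarrow> nat set) \<Rightarrow> real \<Rightarrow> 'g set \<Rightarrow> (nat \<Rightarrow> nat set) \<Rightarrow> bool" where
  "expand_out J r L0 Ls T0 Ts \<alpha> B0 Bs \<longleftrightarrow>
    (\<exists>xs. distinct xs \<and> set xs = new_items J L0 Ls T0 Ts \<and>
       sorted_wrt (\<lambda>a b. cval r b \<le> cval r a) xs \<and>
       (let M = (LEAST M. \<alpha>\<^sup>2 * (l2norm r)\<^sup>2 \<le>
                   (\<Sum>i<M. (cval r (xs ! i))\<^sup>2) + (l2norm (restr (prodset J L0 Ls) r))\<^sup>2);
            Lm0 = L0 \<union> {g. Inl g \<in> set (take M xs)};
            Lms = (\<lambda>j. Ls j \<union> {n. Inr (j, n) \<in> set (take M xs)})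
        in if \<alpha> * l2norm r \<le> l2norm (restr (prodset J Lm0 Lms) r)
           then B0 = Lm0 \<and> (\<forall>j\<in>{1..J}. Bs j = Lms j)
           else (\<forall>j\<in>{1..J}. Bs j = Ts j) \<and>
                (\<exists>ys. distinct ys \<and> set ys = T0 - L0 \<and>
                   sorted_wrt (\<lambda>a b. pi0 r b \<le> pi0 r a) ys \<and>
                   (let K = (LEAST K. \<alpha>\<^sup>2 * (l2norm r)\<^sup>2 \<le>
                               (\<Sum>i<K. (pi0 r (ys ! i))\<^sup>2) + (\<Sum>g\<in>L0. (pi0 r g)\<^sup>2))
                    in B0 = L0 \<union> set (take K ys)))))"

definition cost :: "nat \<Rightarrow> 'g set \<Rightarrow> (nat \<Rightarrow> nat set) \<Rightarrow> 'g set \<Rightarrow> (nat \<Rightarrow> nat set) \<Rightarrow> nat" where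
  "cost J L0 Ls H0 Hs = card (H0 - L0) + (\<Sum>j=1..J. card (Hs j - Ls j))"

text \<open>Competitor product sets Lambda' in G with ||R_Lambda' r|| >= alpha ||r||
(finite differences, so that the cardinalities are the genuine ones; sets with an infinite
difference have infinite cost and can never be minimal).\<close>

definition admissible :: "nat \<Rightarrow> (((nat \<Rightarrow> nat) \<times> 's::countable) \<times> (nat \<Rightarrow> nat) \<Rightarrow> real)
    \<Rightarrow> real \<Rightarrow> ((nat \<Rightarrow> nat) \<times> 's) set \<Rightarrow> (nat \<Rightarrow> nat set)
    \<Rightarrow> ((nat \<Rightarrow> nat) \<times> 's) set \<Rightarrow> (nat \<Rightarrow> nat set) \<Rightarrow> bool" where
  "admissible J r \<alpha> L0 Ls H0 Hs \<longleftrightarrow>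
     H0 \<subseteq> G0set \<and> finite (H0 - L0) \<and> (\<forall>j\<in>{1..J}. finite (Hs j - Ls j)) \<and>
     \<alpha> * l2norm r \<le> l2norm (restr (prodset J H0 Hs) r)"

end

theory Submission
  imports Defs
begin

lemma sum_take_nth:
  assumes "distinct xs" "K \<le> length xs"
  shows "(\<Sum>i<K. g (xs!i)) = sum g (set (take K xs))"
proof -
  have "set (take K xs) = (!) xs ` {..<K}" using assms(2)
    by (simp add: nth_image lessThan_atLeast0)
  moreover have "inj_on ((!) xs) {..<K}" using assms
    by (auto simp: inj_on_def nth_eq_iff_index_eq)
  ultimately show ?thesis by (simp add: sum.reindex)
qed

lemma topk:
  fixes g :: "'a \<Rightarrow> real"
  assumes d: "distinct xs" and s: "sorted_wrt (\<lambda>a b. g b \<le> g a) xs"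
    and nn: "\<And>x. 0 \<le> g x" and S: "S \<subseteq> set xs" and c: "card S \<le> c"
  shows "sum g S \<le> (\<Sum>i<c. g (xs!i))"
proof -
  define T where "T = set (take c xs)"
  have fS: "finite S" using S finite_subset by blast
  have fT: "finite T" unfolding T_def by simp
  have step1: "sum g S \<le> sum g T"
  proof (cases "length xs \<le> c")
    case True
    then have "T = set xs" unfolding T_def by simp
    then show ?thesis using S nn by (intro sum_mono2) auto
  next
    case False
    have cT: "card T = c" unfolding T_def using False d
      by (simp add: distinct_card)
    define v where "v = g (xs!c)"
    have v0: "0 \<le> v" using nn v_def by simp
    have A: "g s \<le> v" if sST: "s \<in> S - T" for s
    proof -
      have "s \<in> set xs" using sST S by blast
      then obtain j where j: "j < length xs" "xs!j = s" by (auto simp: in_set_conv_nth)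
      have "\<not> j < c"
      proof
        assume jc: "j < c"
        have "take c xs ! j = xs ! j" using jc by simp
        moreover have "j < length (take c xs)" using jc j by simp
        ultimately have "s \<in> T" unfolding T_def using j nth_mem by metis
        then show False using sST by blast
      qed
      then have "c = j \<or> c < j" by linarith
      then show ?thesis
      proof
        assume "c = j" then show ?thesis using j v_def by simp
      next
        assume "c < j"
        from sorted_wrt_nth_less[OF s this j(1)] show ?thesis using j v_def by simp
      qed
    qed
    have B: "v \<le> g t" if tTS: "t \<in> T - S" for t
    proof -
      have "t \<in> set (take c xs)" using tTS T_def by blast
      then obtain i where i: "i < length (take c xs)" "take c xs ! i = t" by (auto simp: in_set_conv_nth)
      then have ic: "i < c" and ti: "t = xs ! i" by auto
      have "c < length xs" using False by simp
      from sorted_wrt_nth_less[OF s ic this] show ?thesis using ti v_def by simp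
    qed
    have cc: "card (S - T) \<le> card (T - S)"
    proof -
      have "card S = card (S \<inter> T) + card (S - T)" using fS by (rule card_Int_Diff)
      moreover have "card T = card (T \<inter> S) + card (T - S)" using fT by (rule card_Int_Diff)
      moreover have "T \<inter> S = S \<inter> T" by blast
      ultimately show ?thesis using c cT by simp
    qed
    have "sum g S = sum g (S \<inter> T) + sum g (S - T)" using fS by (rule sum.Int_Diff)
    also have "sum g (S - T) \<le> of_nat (card (S - T)) * v"
      using sum_bounded_above[of "S - T" g v] A by auto
    also have "of_nat (card (S - T)) * v \<le> of_nat (card (T - S)) * v"
      using cc v0 by (simp add: mult_right_mono)
    also have "of_nat (card (T - S)) * v \<le> sum g (T - S)"
      using sum_bounded_below[of "T - S" v g] B by auto
    also have "sum g (T \<inter> S) + sum g (T - S) = sum g T" using fT by (rule sum.Int_Diff[symmetric])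
    moreover have "T \<inter> S = S \<inter> T" by blast
    ultimately show ?thesis by simp
  qed
  show ?thesis
  proof (cases "c \<le> length xs")
    case True
    then show ?thesis using step1 sum_take_nth[OF d True, of g] T_def by simp
  next
    case False
    then have "T = set (take (length xs) xs)" unfolding T_def by simp
    then have "sum g T = (\<Sum>i<length xs. g (xs!i))" using sum_take_nth[OF d order.refl, of g] by simp
    also have "\<dots> \<le> (\<Sum>i<c. g (xs!i))" using nn False by (intro sum_mono2) auto
    finally show ?thesis using step1 by simp
  qed
qed

lemma fin_prodset:
  assumes "finite T0" "\<forall>j\<in>{1..J}. finite (Ts j)"
  shows "finite (prodset J T0 Ts)"
proof -
  define F where "F = (\<lambda>f j. if j \<in> {1..J} then f j else (0::nat)) ` PiE {1..J} Ts"
  have "finite F" unfolding F_def using assms by (intro finite_imageI finite_PiE) auto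
  moreover have "prodset J T0 Ts \<subseteq> T0 \<times> F"
  proof
    fix x assume "x \<in> prodset J T0 Ts"
    then obtain g nu where x: "x = (g, nu)" "g \<in> T0" "\<forall>j\<in>{1..J}. nu j \<in> Ts j" "\<forall>j. j \<notin> {1..J} \<longrightarrow> nu j = 0"
      unfolding prodset_def by auto
    have "nu = (\<lambda>j. if j \<in> {1..J} then restrict nu {1..J} j else 0)" using x(4) by auto
    moreover have "restrict nu {1..J} \<in> PiE {1..J} Ts" using x(3) by auto
    ultimately have "nu \<in> F" unfolding F_def by blast
    then show "x \<in> T0 \<times> F" using x by auto
  qed
  ultimately show ?thesis using assms(1) by (meson finite_SigmaI finite_subset)
qed

lemma infsum_sq:
  fixes r :: "'x \<Rightarrow> real"
  assumes "finite P" "\<forall>x. r x \<noteq> 0 \<longrightarrow> x \<in> P"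
  shows "(\<Sum>\<^sub>\<infinity>x\<in>A. (r x)\<^sup>2) = (\<Sum>x\<in>P \<inter> A. (r x)\<^sup>2)"
proof -
  have "(\<Sum>\<^sub>\<infinity>x\<in>A. (r x)\<^sup>2) = (\<Sum>\<^sub>\<infinity>x\<in>P \<inter> A. (r x)\<^sup>2)"
    using assms(2) by (intro infsum_cong_neutral) auto
  then show ?thesis using assms(1) by simp
qed

lemma l2_restr:
  fixes r :: "'x \<Rightarrow> real"
  assumes "finite P" "\<forall>x. r x \<noteq> 0 \<longrightarrow> x \<in> P"
  shows "(l2norm (restr Q r))\<^sup>2 = (\<Sum>x\<in>P \<inter> Q. (r x)\<^sup>2)"
proof -
  have "(\<Sum>\<^sub>\<infinity>x. (restr Q r x)\<^sup>2) = (\<Sum>\<^sub>\<infinity>x\<in>Q. (r x)\<^sup>2)"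
    unfolding restr_def by (intro infsum_cong_neutral) auto
  also have "\<dots> = (\<Sum>x\<in>P \<inter> Q. (r x)\<^sup>2)" using infsum_sq[OF assms] .
  finally show ?thesis unfolding l2norm_def by (simp add: sum_nonneg)
qed

lemma l2_full:
  fixes r :: "'x \<Rightarrow> real"
  assumes "finite P" "\<forall>x. r x \<noteq> 0 \<longrightarrow> x \<in> P"
  shows "(l2norm r)\<^sup>2 = (\<Sum>x\<in>P. (r x)\<^sup>2)"
  using l2_restr[OF assms, of UNIV] by (simp add: restr_def)

lemma pi0_sq:
  fixes r :: "'g \<times> (nat \<Rightarrow> nat) \<Rightarrow> real"
  assumes "finite P" "\<forall>x. r x \<noteq> 0 \<longrightarrow> x \<in> P"
  shows "(pi0 r g)\<^sup>2 = (\<Sum>x\<in>{x\<in>P. fst x = g}. (r x)\<^sup>2)"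
proof -
  have "(\<Sum>\<^sub>\<infinity>nu. (r (g, nu))\<^sup>2) = (\<Sum>\<^sub>\<infinity>x\<in>Pair g ` UNIV. (r x)\<^sup>2)"
    by (subst infsum_reindex) (auto simp: inj_on_def o_def)
  also have "\<dots> = (\<Sum>x\<in>P \<inter> range (Pair g). (r x)\<^sup>2)" using infsum_sq[OF assms] .
  also have "P \<inter> range (Pair g) = {x\<in>P. fst x = g}" by auto
  finally show ?thesis unfolding pi0_def by (simp add: sum_nonneg)
qed

lemma pij_sq:
  fixes r :: "'g \<times> (nat \<Rightarrow> nat) \<Rightarrow> real"
  assumes "finite P" "\<forall>x. r x \<noteq> 0 \<longrightarrow> x \<in> P"
  shows "(pij r j n)\<^sup>2 = (\<Sum>x\<in>{x\<in>P. snd x j = n}. (r x)\<^sup>2)"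
proof -
  have "(\<Sum>\<^sub>\<infinity>x\<in>{x. snd x j = n}. (r x)\<^sup>2) = (\<Sum>x\<in>P \<inter> {x. snd x j = n}. (r x)\<^sup>2)"
    using infsum_sq[OF assms] .
  also have "P \<inter> {x. snd x j = n} = {x\<in>P. snd x j = n}" by auto
  finally show ?thesis unfolding pij_def by (simp add: sum_nonneg)
qed

lemma sum_Un_le_nn:
  fixes f :: "'x \<Rightarrow> real"
  assumes "finite A" "finite B" "\<And>x. 0 \<le> f x"
  shows "sum f (A \<union> B) \<le> sum f A + sum f B"
proof -
  have "sum f (A \<union> B) = sum f A + sum f B - sum f (A \<inter> B)" using assms(1,2) by (rule sum_Un)
  moreover have "0 \<le> sum f (A \<inter> B)" by (rule sum_nonneg) (rule assms(3))
  ultimately show ?thesis by linarith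
qed

lemma sorted_sq:
  fixes f :: "'a \<Rightarrow> real"
  assumes "sorted_wrt (\<lambda>a b. f b \<le> f a) xs" "\<And>x. 0 \<le> f x"
  shows "sorted_wrt (\<lambda>a b. (f b)\<^sup>2 \<le> (f a)\<^sup>2) xs"
  using assms(1)
proof (induction xs)
  case (Cons a xs)
  then show ?case using assms(2) by (auto intro: power_mono)
qed simp

lemma cval_nonneg: "0 \<le> cval r i"
  by (cases i) (auto simp: cval_def pi0_def pij_def intro!: infsum_nonneg)

lemma sum_UN_le_nonneg:
  fixes f :: "'x \<Rightarrow> real"
  assumes "finite I" "\<And>i. i \<in> I \<Longrightarrow> finite (A i)" "\<And>x. 0 \<le> f x"
  shows "sum f (\<Union>i\<in>I. A i) \<le> (\<Sum>i\<in>I. sum f (A i))"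
  using assms
proof (induction I rule: finite_induct)
  case (insert i I)
  have "sum f (\<Union>k\<in>insert i I. A k) = sum f (A i \<union> (\<Union>k\<in>I. A k))" by simp
  also have "\<dots> \<le> sum f (A i) + sum f (\<Union>k\<in>I. A k)"
  proof -
    have "finite (A i)" "finite (\<Union>k\<in>I. A k)" using insert.prems insert.hyps by auto
    then have "sum f (A i \<union> (\<Union>k\<in>I. A k)) = sum f (A i) + sum f (\<Union>k\<in>I. A k) - sum f (A i \<inter> (\<Union>k\<in>I. A k))"
      by (rule sum_Un)
    moreover have "0 \<le> sum f (A i \<inter> (\<Union>k\<in>I. A k))" by (rule sum_nonneg) (rule insert.prems(2))
    ultimately show ?thesis by linarith
  qed
  finally show ?case using insert by simp
qed simp

lemma sq_le_iff:
  assumes "0 < (a::real)" "0 \<le> x" "0 \<le> y"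
  shows "a * x \<le> y \<longleftrightarrow> a\<^sup>2 * x\<^sup>2 \<le> y\<^sup>2"
proof -
  have ax: "0 \<le> a * x" using assms by simp
  have "a * x \<le> y \<longleftrightarrow> (a * x)\<^sup>2 \<le> y\<^sup>2"
    using power_mono_iff[OF ax assms(3), of 2] by simp
  then show ?thesis by (simp add: power_mult_distrib)
qed

lemma l2_nonneg: "0 \<le> l2norm v" unfolding l2norm_def
  by (simp add: infsum_nonneg)

lemma prodset_cong:
  assumes "\<forall>j\<in>{1..J}. A j = B j"
  shows "prodset J G A = prodset J G B"
  using assms unfolding prodset_def by auto

lemma sum_fst_group:
  fixes f :: "'g \<times> 'b \<Rightarrow> real"
  assumes "finite P" "finite G"
  shows "sum f {x\<in>P. fst x \<in> G} = (\<Sum>g\<in>G. sum f {x\<in>P. fst x = g})"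
proof -
  have "{x\<in>P. fst x \<in> G} = (\<Union>g\<in>G. {x\<in>P. fst x = g})" by auto
  moreover have "sum f (\<Union>g\<in>G. {x\<in>P. fst x = g}) = (\<Sum>g\<in>G. sum f {x\<in>P. fst x = g})"
    using assms by (intro sum.UNION_disjoint) auto
  ultimately show ?thesis by simp
qed


lemma items_sq:
  fixes r :: "'g \<times> (nat \<Rightarrow> nat) \<Rightarrow> real"
  assumes "finite P" "\<forall>x. r x \<noteq> 0 \<longrightarrow> x \<in> P"
  shows "(cval r i)\<^sup>2 = sum (\<lambda>x. (r x)\<^sup>2)
           {x\<in>P. case i of Inl g \<Rightarrow> fst x = g | Inr (j, n) \<Rightarrow> snd x j = n}"
proof (cases i)
  case (Inl g)
  then show ?thesis using pi0_sq[OF assms] by (simp add: cval_def)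
next
  case (Inr jn)
  then show ?thesis using pij_sq[OF assms] by (cases jn) (simp add: cval_def)
qed

theorem theorem4p4:
  fixes J :: nat
    and r :: "((nat \<Rightarrow> nat) \<times> 's::countable) \<times> (nat \<Rightarrow> nat) \<Rightarrow> real"
    and L0 T0 B0 :: "((nat \<Rightarrow> nat) \<times> 's) set"
    and Ls Ts Bs :: "nat \<Rightarrow> nat set"
    and \<alpha> :: real
  assumes "J \<ge> 1"
    and "L0 \<subseteq> G0set" and "T0 \<subseteq> G0set"
    and "finite L0" and "finite T0"
    and "\<forall>j\<in>{1..J}. finite (Ls j) \<and> finite (Ts j)"
    and "L0 \<subseteq> T0" and "\<forall>j\<in>{1..J}. Ls j \<subseteq> Ts j"
    and "\<forall>j\<in>{1..J}. card (Ts j - Ls j) = 1"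
    and "\<forall>x. r x \<noteq> 0 \<longrightarrow> x \<in> prodset J T0 Ts"
    and "0 < \<alpha>" and "\<alpha> < 1"
    and "expand_out J r L0 Ls T0 Ts \<alpha> B0 Bs"
  shows "\<alpha> * l2norm r \<le> l2norm (restr (prodset J B0 Bs) r) \<and>
         (\<forall>H0 Hs. admissible J r \<alpha> L0 Ls H0 Hs \<and>
             (\<forall>H0' Hs'. admissible J r \<alpha> L0 Ls H0' Hs' \<longrightarrow>
                 cost J L0 Ls H0 Hs \<le> cost J L0 Ls H0' Hs')
           \<longrightarrow> cost J L0 Ls B0 Bs \<le> cost J L0 Ls H0 Hs + J)"
proof -
  define P where "P = prodset J T0 Ts"
  have fP: "finite P" unfolding P_def using assms(5,6) by (intro fin_prodset) auto
  have supp: "\<forall>x. r x \<noteq> 0 \<longrightarrow> x \<in> P" using assms(10) unfolding P_def .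
  define N where "N = (l2norm r)\<^sup>2"
  have N: "N = (\<Sum>x\<in>P. (r x)\<^sup>2)" unfolding N_def using l2_full[OF fP supp] .
  have N0: "0 \<le> N" unfolding N_def by simp
  have nsq: "\<And>Q. (l2norm (restr Q r))\<^sup>2 = (\<Sum>x\<in>P \<inter> Q. (r x)\<^sup>2)"
    using l2_restr[OF fP supp] .
  have a2: "\<alpha>\<^sup>2 \<le> 1" using assms(11,12) by (simp add: power_le_one)
  have key: "\<alpha> * l2norm r \<le> l2norm (restr Q r) \<longleftrightarrow> \<alpha>\<^sup>2 * N \<le> (\<Sum>x\<in>P \<inter> Q. (r x)\<^sup>2)" for Q
    unfolding N_def nsq[symmetric] using sq_le_iff[OF assms(11) l2_nonneg l2_nonneg] .
  have pi0s: "\<And>g. (pi0 r g)\<^sup>2 = (\<Sum>x\<in>{x\<in>P. fst x = g}. (r x)\<^sup>2)" using pi0_sq[OF fP supp] .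
  have Pfst: "P \<inter> prodset J G Ts = {x\<in>P. fst x \<in> G}" for G
    unfolding P_def prodset_def by auto
  have grp: "(\<Sum>x\<in>P \<inter> prodset J G Ts. (r x)\<^sup>2) = (\<Sum>g\<in>G. (pi0 r g)\<^sup>2)" if "finite G" for G
    unfolding Pfst pi0s using sum_fst_group[OF fP that] .
  define itemset where "itemset i = {x\<in>P. case i of Inl g \<Rightarrow> fst x = g | Inr (j, n) \<Rightarrow> snd x j = n}"
    for i :: "((nat \<Rightarrow> nat) \<times> 's) + nat \<times> nat"
  have isq: "(cval r i)\<^sup>2 = (\<Sum>x\<in>itemset i. (r x)\<^sup>2)" for i
    unfolding itemset_def using items_sq[OF fP supp] .
  have compet: "\<exists>I. I \<subseteq> new_items J L0 Ls T0 Ts \<and> card I \<le> cost J L0 Ls H0 Hs \<and>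
      (\<Sum>x\<in>P \<inter> prodset J H0 Hs. (r x)\<^sup>2) \<le> (\<Sum>x\<in>P \<inter> prodset J L0 Ls. (r x)\<^sup>2) + (\<Sum>i\<in>I. (cval r i)\<^sup>2)"
    if adm: "admissible J r \<alpha> L0 Ls H0 Hs" for H0 Hs
  proof -
    define I0 :: "(((nat \<Rightarrow> nat) \<times> 's) + nat \<times> nat) set" where "I0 = Inl ` ((H0 \<inter> T0) - L0)"
    define I1 :: "(((nat \<Rightarrow> nat) \<times> 's) + nat \<times> nat) set" where "I1 = (\<Union>j\<in>{1..J}. (\<lambda>n. Inr (j, n)) ` ((Hs j \<inter> Ts j) - Ls j))"
    define I where "I = I0 \<union> I1"
    have fI0: "finite I0" unfolding I0_def using assms(5) by simp
    have fI1: "finite I1" unfolding I1_def using assms(6) by auto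
    have sub: "I \<subseteq> new_items J L0 Ls T0 Ts" unfolding I_def I0_def I1_def new_items_def by auto
    have c0: "card I0 \<le> card (H0 - L0)"
    proof -
      have "card I0 \<le> card ((H0 \<inter> T0) - L0)" unfolding I0_def
        by (rule card_image_le) (use assms(5) in auto)
      also have "\<dots> \<le> card (H0 - L0)" using adm unfolding admissible_def by (intro card_mono) auto
      finally show ?thesis .
    qed
    have c1: "card I1 \<le> (\<Sum>j=1..J. card (Hs j - Ls j))"
    proof -
      have "card I1 \<le> (\<Sum>j=1..J. card ((\<lambda>n. Inr (j, n) :: (((nat \<Rightarrow> nat) \<times> 's) + nat \<times> nat)) ` ((Hs j \<inter> Ts j) - Ls j)))"
        unfolding I1_def
        using card_UN_le[of "{1..J}" "\<lambda>j. ((\<lambda>n. Inr (j, n) :: (((nat \<Rightarrow> nat) \<times> 's) + nat \<times> nat)) ` ((Hs j \<inter> Ts j) - Ls j))"] by simp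
      also have "\<dots> \<le> (\<Sum>j=1..J. card (Hs j - Ls j))"
      proof (rule sum_mono)
        fix j assume j: "j \<in> {1..J}"
        have "card ((\<lambda>n. Inr (j, n) :: (((nat \<Rightarrow> nat) \<times> 's) + nat \<times> nat)) ` ((Hs j \<inter> Ts j) - Ls j)) \<le> card ((Hs j \<inter> Ts j) - Ls j)"
          by (rule card_image_le) (use assms(6) j in auto)
        also have "\<dots> \<le> card (Hs j - Ls j)"
          using adm j unfolding admissible_def by (intro card_mono) auto
        finally show "card ((\<lambda>n. Inr (j, n) :: (((nat \<Rightarrow> nat) \<times> 's) + nat \<times> nat)) ` ((Hs j \<inter> Ts j) - Ls j)) \<le> card (Hs j - Ls j)" .
      qed
      finally show ?thesis .
    qed
    have cI: "card I \<le> cost J L0 Ls H0 Hs"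
      unfolding I_def cost_def using c0 c1 card_Un_le[of I0 I1] by linarith
    have cover: "P \<inter> prodset J H0 Hs \<subseteq> (P \<inter> prodset J L0 Ls) \<union> (\<Union>i\<in>I. itemset i)"
    proof
      fix x assume x: "x \<in> P \<inter> prodset J H0 Hs"
      obtain g nu where xe: "x = (g, nu)" by (cases x)
      have xP: "g \<in> T0" "\<forall>j\<in>{1..J}. nu j \<in> Ts j" "\<forall>j. j \<notin> {1..J} \<longrightarrow> nu j = 0"
        using x xe unfolding P_def prodset_def by auto
      have xH: "g \<in> H0" "\<forall>j\<in>{1..J}. nu j \<in> Hs j" using x xe unfolding prodset_def by auto
      show "x \<in> (P \<inter> prodset J L0 Ls) \<union> (\<Union>i\<in>I. itemset i)"
      proof (cases "g \<in> L0")
        case False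
        then have "Inl g \<in> I" unfolding I_def I0_def using xP xH by auto
        moreover have "x \<in> itemset (Inl g)" unfolding itemset_def using x xe by auto
        ultimately show ?thesis by blast
      next
        case gL: True
        show ?thesis
        proof (cases "\<exists>j\<in>{1..J}. nu j \<notin> Ls j")
          case True
          then obtain j where j: "j \<in> {1..J}" "nu j \<notin> Ls j" by blast
          then have "Inr (j, nu j) \<in> I" unfolding I_def I1_def using xP xH
            by (intro UnI2 UN_I[of j]) auto
          moreover have "x \<in> itemset (Inr (j, nu j))" unfolding itemset_def using x xe by auto
          ultimately show ?thesis by blast
        next
          case False
          then have "x \<in> prodset J L0 Ls" using gL xP xe unfolding prodset_def by auto
          then show ?thesis using x by blast
        qed
      qed
    qed
    have fIt: "finite (itemset i)" for i unfolding itemset_def using fP by simp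
    have "(\<Sum>x\<in>P \<inter> prodset J H0 Hs. (r x)\<^sup>2) \<le> (\<Sum>x\<in>(P \<inter> prodset J L0 Ls) \<union> (\<Union>i\<in>I. itemset i). (r x)\<^sup>2)"
      using cover fP fI0 fI1 fIt unfolding I_def by (intro sum_mono2) auto
    also have "\<dots> \<le> (\<Sum>x\<in>P \<inter> prodset J L0 Ls. (r x)\<^sup>2) + (\<Sum>x\<in>(\<Union>i\<in>I. itemset i). (r x)\<^sup>2)"
      using fP fI0 fI1 fIt unfolding I_def by (intro sum_Un_le_nn) auto
    also have "(\<Sum>x\<in>(\<Union>i\<in>I. itemset i). (r x)\<^sup>2) \<le> (\<Sum>i\<in>I. (cval r i)\<^sup>2)"
      unfolding isq using fI0 fI1 fIt unfolding I_def by (intro sum_UN_le_nonneg) auto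
    finally show ?thesis using sub cI by (intro exI[of _ I]) auto
  qed
  obtain xs where xs: "distinct xs" "set xs = new_items J L0 Ls T0 Ts"
      "sorted_wrt (\<lambda>a b. cval r b \<le> cval r a) xs"
    and rest: "let M = (LEAST M. \<alpha>\<^sup>2 * (l2norm r)\<^sup>2 \<le>
                   (\<Sum>i<M. (cval r (xs ! i))\<^sup>2) + (l2norm (restr (prodset J L0 Ls) r))\<^sup>2);
            Lm0 = L0 \<union> {g. Inl g \<in> set (take M xs)};
            Lms = (\<lambda>j. Ls j \<union> {n. Inr (j, n) \<in> set (take M xs)})
        in if \<alpha> * l2norm r \<le> l2norm (restr (prodset J Lm0 Lms) r)
           then B0 = Lm0 \<and> (\<forall>j\<in>{1..J}. Bs j = Lms j)
           else (\<forall>j\<in>{1..J}. Bs j = Ts j) \<and>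
                (\<exists>ys. distinct ys \<and> set ys = T0 - L0 \<and>
                   sorted_wrt (\<lambda>a b. pi0 r b \<le> pi0 r a) ys \<and>
                   (let K = (LEAST K. \<alpha>\<^sup>2 * (l2norm r)\<^sup>2 \<le>
                               (\<Sum>i<K. (pi0 r (ys ! i))\<^sup>2) + (\<Sum>g\<in>L0. (pi0 r g)\<^sup>2))
                    in B0 = L0 \<union> set (take K ys)))"
    using assms(13) unfolding expand_out_def by blast
  define M where "M = (LEAST M. \<alpha>\<^sup>2 * (l2norm r)\<^sup>2 \<le>
                   (\<Sum>i<M. (cval r (xs ! i))\<^sup>2) + (l2norm (restr (prodset J L0 Ls) r))\<^sup>2)"
  define Lm0 where "Lm0 = L0 \<union> {g. Inl g \<in> set (take M xs)}"
  define Lms where "Lms = (\<lambda>j. Ls j \<union> {n. Inr (j, n) \<in> set (take M xs)})"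
  have rest': "if \<alpha> * l2norm r \<le> l2norm (restr (prodset J Lm0 Lms) r)
           then B0 = Lm0 \<and> (\<forall>j\<in>{1..J}. Bs j = Lms j)
           else (\<forall>j\<in>{1..J}. Bs j = Ts j) \<and>
                (\<exists>ys. distinct ys \<and> set ys = T0 - L0 \<and>
                   sorted_wrt (\<lambda>a b. pi0 r b \<le> pi0 r a) ys \<and>
                   (let K = (LEAST K. \<alpha>\<^sup>2 * (l2norm r)\<^sup>2 \<le>
                               (\<Sum>i<K. (pi0 r (ys ! i))\<^sup>2) + (\<Sum>g\<in>L0. (pi0 r g)\<^sup>2))
                    in B0 = L0 \<union> set (take K ys)))"
    using rest unfolding M_def Lm0_def Lms_def by (simp only: Let_def)
  show ?thesis
  proof (cases "\<alpha> * l2norm r \<le> l2norm (restr (prodset J Lm0 Lms) r)")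
    case True
    with rest' have B: "B0 = Lm0" "\<forall>j\<in>{1..J}. Bs j = Lms j" by auto
    have ps: "prodset J B0 Bs = prodset J Lm0 Lms" using B by (simp add: prodset_cong)
    have costB: "cost J L0 Ls B0 Bs \<le> M"
    proof -
      define S where "S = set (take M xs)"
      have fS: "finite S" unfolding S_def by simp
      define A0 where "A0 = Lm0 - L0"
      define A where "A j = Lms j - Ls j" for j
      have A0S: "Inl ` A0 \<subseteq> S" unfolding A0_def Lm0_def S_def by auto
      have AS: "(\<lambda>n. Inr (j, n)) ` A j \<subseteq> S" for j unfolding A_def Lms_def S_def by auto
      have fA0: "finite A0" using finite_subset[OF A0S fS] by (rule finite_imageD) (simp add: inj_on_def)
      have fA: "finite (A j)" for j using finite_subset[OF AS[of j] fS] by (rule finite_imageD) (simp add: inj_on_def)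
      define U where "U = (Inl :: (nat \<Rightarrow> nat) \<times> 's \<Rightarrow> (((nat \<Rightarrow> nat) \<times> 's) + nat \<times> nat)) ` A0 \<union> (\<Union>j\<in>{1..J}. (\<lambda>n. Inr (j, n) :: (((nat \<Rightarrow> nat) \<times> 's) + nat \<times> nat)) ` A j)"
      have "card U = card ((Inl :: (nat \<Rightarrow> nat) \<times> 's \<Rightarrow> (((nat \<Rightarrow> nat) \<times> 's) + nat \<times> nat)) ` A0) + card (\<Union>j\<in>{1..J}. (\<lambda>n. Inr (j, n) :: (((nat \<Rightarrow> nat) \<times> 's) + nat \<times> nat)) ` A j)"
        unfolding U_def using fA0 fA by (intro card_Un_disjoint) auto
      also have "card (\<Union>j\<in>{1..J}. (\<lambda>n. Inr (j, n) :: (((nat \<Rightarrow> nat) \<times> 's) + nat \<times> nat)) ` A j) = (\<Sum>j=1..J. card ((\<lambda>n. Inr (j, n) :: (((nat \<Rightarrow> nat) \<times> 's) + nat \<times> nat)) ` A j))"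
        using fA by (intro card_UN_disjoint) auto
      also have "\<dots> = (\<Sum>j=1..J. card (A j))"
        by (intro sum.cong refl card_image) (auto simp: inj_on_def)
      also have "card ((Inl :: (nat \<Rightarrow> nat) \<times> 's \<Rightarrow> (((nat \<Rightarrow> nat) \<times> 's) + nat \<times> nat)) ` A0) = card A0" by (simp add: card_image)
      finally have "card U = card A0 + (\<Sum>j=1..J. card (A j))" .
      moreover have "card U \<le> card S"
      proof (rule card_mono[OF fS])
        show "U \<subseteq> S" unfolding U_def
        proof (intro Un_least UN_least)
          show "Inl ` A0 \<subseteq> S" by (rule A0S)
          fix j show "(\<lambda>n. Inr (j, n)) ` A j \<subseteq> S" by (rule AS)
        qed
      qed
      moreover have "card S \<le> M"
      proof -
        have "card S \<le> length (take M xs)" unfolding S_def by (rule card_length)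
        then show ?thesis by simp
      qed
      moreover have "cost J L0 Ls B0 Bs = card A0 + (\<Sum>j=1..J. card (A j))"
        unfolding cost_def A0_def A_def using B by simp
      ultimately show ?thesis by linarith
    qed
    show ?thesis
    proof (intro conjI allI impI)
      show "\<alpha> * l2norm r \<le> l2norm (restr (prodset J B0 Bs) r)" using True ps by simp
    next
      fix H0 Hs assume h: "admissible J r \<alpha> L0 Ls H0 Hs \<and>
             (\<forall>H0' Hs'. admissible J r \<alpha> L0 Ls H0' Hs' \<longrightarrow>
                 cost J L0 Ls H0 Hs \<le> cost J L0 Ls H0' Hs')"
      then have adm: "admissible J r \<alpha> L0 Ls H0 Hs" by blast
      obtain I where I: "I \<subseteq> set xs" "card I \<le> cost J L0 Ls H0 Hs"
        "(\<Sum>x\<in>P \<inter> prodset J H0 Hs. (r x)\<^sup>2) \<le> (\<Sum>x\<in>P \<inter> prodset J L0 Ls. (r x)\<^sup>2) + (\<Sum>i\<in>I. (cval r i)\<^sup>2)"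
        using compet[OF adm] xs(2) by auto
      have "\<alpha>\<^sup>2 * N \<le> (\<Sum>x\<in>P \<inter> prodset J H0 Hs. (r x)\<^sup>2)"
        using adm key unfolding admissible_def by blast
      also have "\<dots> \<le> (\<Sum>x\<in>P \<inter> prodset J L0 Ls. (r x)\<^sup>2) + (\<Sum>i\<in>I. (cval r i)\<^sup>2)" by fact
      also have "(\<Sum>i\<in>I. (cval r i)\<^sup>2) \<le> (\<Sum>i<cost J L0 Ls H0 Hs. (cval r (xs!i))\<^sup>2)"
      proof (rule topk[OF xs(1) _ _ I(1,2)])
        show "sorted_wrt (\<lambda>a b. (cval r b)\<^sup>2 \<le> (cval r a)\<^sup>2) xs"
          using xs(3) cval_nonneg by (rule sorted_sq)
      qed simp
      finally have "\<alpha>\<^sup>2 * (l2norm r)\<^sup>2 \<le> (\<Sum>i<cost J L0 Ls H0 Hs. (cval r (xs!i))\<^sup>2) + (l2norm (restr (prodset J L0 Ls) r))\<^sup>2"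
        unfolding N_def nsq by simp
      then have "M \<le> cost J L0 Ls H0 Hs" unfolding M_def by (rule Least_le)
      then show "cost J L0 Ls B0 Bs \<le> cost J L0 Ls H0 Hs + J" using costB by linarith
    qed
  next
    case False
    with rest' obtain ys where B: "\<forall>j\<in>{1..J}. Bs j = Ts j" and ys: "distinct ys" "set ys = T0 - L0"
        "sorted_wrt (\<lambda>a b. pi0 r b \<le> pi0 r a) ys"
      and B0: "B0 = L0 \<union> set (take (LEAST K. \<alpha>\<^sup>2 * (l2norm r)\<^sup>2 \<le>
                               (\<Sum>i<K. (pi0 r (ys ! i))\<^sup>2) + (\<Sum>g\<in>L0. (pi0 r g)\<^sup>2)) ys)"
      by (auto simp: Let_def)
    define K where "K = (LEAST K. \<alpha>\<^sup>2 * (l2norm r)\<^sup>2 \<le>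
                               (\<Sum>i<K. (pi0 r (ys ! i))\<^sup>2) + (\<Sum>g\<in>L0. (pi0 r g)\<^sup>2))"
    have B0': "B0 = L0 \<union> set (take K ys)" using B0 K_def by simp
    have ps: "prodset J B0 Bs = prodset J B0 Ts" using B by (simp add: prodset_cong)
    have sortsq: "sorted_wrt (\<lambda>a b. (pi0 r b)\<^sup>2 \<le> (pi0 r a)\<^sup>2) ys"
      using ys(3) by (rule sorted_sq) (simp add: pi0_def infsum_nonneg)
    have fys: "finite (set ys)" by simp
    have disj: "L0 \<inter> set ys = {}" using ys(2) by auto
    have condlen: "\<alpha>\<^sup>2 * (l2norm r)\<^sup>2 \<le> (\<Sum>i<length ys. (pi0 r (ys ! i))\<^sup>2) + (\<Sum>g\<in>L0. (pi0 r g)\<^sup>2)"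
    proof -
      have "(\<Sum>i<length ys. (pi0 r (ys ! i))\<^sup>2) = (\<Sum>g\<in>T0 - L0. (pi0 r g)\<^sup>2)"
        using sum_take_nth[OF ys(1), of "length ys"] ys(2) by simp
      moreover have "(\<Sum>g\<in>T0 - L0. (pi0 r g)\<^sup>2) + (\<Sum>g\<in>L0. (pi0 r g)\<^sup>2) = (\<Sum>g\<in>T0. (pi0 r g)\<^sup>2)"
        using assms(5,7) by (metis sum.subset_diff)
      moreover have "(\<Sum>g\<in>T0. (pi0 r g)\<^sup>2) = N"
        using grp[OF assms(5)] N unfolding P_def by (simp add: Int_absorb)
      moreover have "\<alpha>\<^sup>2 * N \<le> N" using mult_right_mono[OF a2 N0] by simp
      ultimately show ?thesis unfolding N_def[symmetric] by linarith
    qed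
    have Kle: "K \<le> length ys" unfolding K_def using condlen by (rule Least_le)
    have Kc: "\<alpha>\<^sup>2 * (l2norm r)\<^sup>2 \<le> (\<Sum>i<K. (pi0 r (ys ! i))\<^sup>2) + (\<Sum>g\<in>L0. (pi0 r g)\<^sup>2)"
      unfolding K_def using condlen by (rule LeastI)
    show ?thesis
    proof (intro conjI allI impI)
      have "(\<Sum>x\<in>P \<inter> prodset J B0 Ts. (r x)\<^sup>2) = (\<Sum>g\<in>B0. (pi0 r g)\<^sup>2)"
        using grp B0' assms(4) by simp
      also have "\<dots> = (\<Sum>g\<in>L0. (pi0 r g)\<^sup>2) + (\<Sum>g\<in>set (take K ys). (pi0 r g)\<^sup>2)"
        unfolding B0' using assms(4) disj by (intro sum.union_disjoint) (auto dest: in_set_takeD)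
      also have "(\<Sum>g\<in>set (take K ys). (pi0 r g)\<^sup>2) = (\<Sum>i<K. (pi0 r (ys ! i))\<^sup>2)"
        using sum_take_nth[OF ys(1) Kle, of "\<lambda>g. (pi0 r g)\<^sup>2"] by simp
      finally have "\<alpha>\<^sup>2 * N \<le> (\<Sum>x\<in>P \<inter> prodset J B0 Ts. (r x)\<^sup>2)" using Kc unfolding N_def by simp
      then show "\<alpha> * l2norm r \<le> l2norm (restr (prodset J B0 Bs) r)" using key ps by simp
    next
      fix H0 Hs assume h: "admissible J r \<alpha> L0 Ls H0 Hs \<and>
             (\<forall>H0' Hs'. admissible J r \<alpha> L0 Ls H0' Hs' \<longrightarrow>
                 cost J L0 Ls H0 Hs \<le> cost J L0 Ls H0' Hs')"
      then have adm: "admissible J r \<alpha> L0 Ls H0 Hs" by blast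
      define c where "c = cost J L0 Ls H0 Hs"
      define S where "S = (H0 \<inter> T0) - L0"
      have fS: "finite S" unfolding S_def using assms(5) by simp
      have cS: "card S \<le> c"
      proof -
        have "card S \<le> card (H0 - L0)" unfolding S_def using adm unfolding admissible_def
          by (intro card_mono) auto
        then show ?thesis unfolding c_def cost_def by simp
      qed
      have "\<alpha>\<^sup>2 * N \<le> (\<Sum>x\<in>P \<inter> prodset J H0 Hs. (r x)\<^sup>2)"
        using adm key unfolding admissible_def by blast
      also have "\<dots> \<le> (\<Sum>x\<in>P \<inter> prodset J (S \<union> L0) Ts. (r x)\<^sup>2)"
        using fP unfolding Pfst by (intro sum_mono2) (auto simp: P_def prodset_def S_def)
      also have "\<dots> = (\<Sum>g\<in>S \<union> L0. (pi0 r g)\<^sup>2)" using grp fS assms(4) by simp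
      also have "\<dots> = (\<Sum>g\<in>L0. (pi0 r g)\<^sup>2) + (\<Sum>g\<in>S. (pi0 r g)\<^sup>2)"
        using fS assms(4) by (subst sum.union_disjoint) (auto simp: S_def)
      also have "(\<Sum>g\<in>S. (pi0 r g)\<^sup>2) \<le> (\<Sum>i<c. (pi0 r (ys ! i))\<^sup>2)"
        by (rule topk[OF ys(1) sortsq]) (use ys(2) cS in \<open>auto simp: S_def\<close>)
      finally have "\<alpha>\<^sup>2 * (l2norm r)\<^sup>2 \<le> (\<Sum>i<c. (pi0 r (ys ! i))\<^sup>2) + (\<Sum>g\<in>L0. (pi0 r g)\<^sup>2)"
        unfolding N_def by simp
      then have Kc': "K \<le> c" unfolding K_def by (rule Least_le)
      have "card (B0 - L0) \<le> K"
      proof -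
        have "card (B0 - L0) \<le> card (set (take K ys))" unfolding B0' by (intro card_mono) auto
        also have "\<dots> \<le> length (take K ys)" by (rule card_length)
        also have "\<dots> \<le> K" by simp
        finally show ?thesis .
      qed
      moreover have "(\<Sum>j=1..J. card (Bs j - Ls j)) = J"
        using B assms(9) by simp
      ultimately show "cost J L0 Ls B0 Bs \<le> cost J L0 Ls H0 Hs + J"
        using Kc' unfolding cost_def c_def by linarith
    qed
  qed
qed

end
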